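(* For every positive integer $n$, the number of symmetric gapsets in $\mathcal{G}_{2n}(3n+1)$ is $2^{n-1}$.
   Context: A gapset is a finite set $G\subset\mathbb{N}=\{1,2,\dots\}$ such that whenever $z\in G$ and $z=x+y$ with $x,y\in\mathbb{N}$, then $x\in G$ or $y\in G$; its genus is $g=\#G$. Writing $G=\{\ell_1<\dots<\ell_g\}$, the Frobenius number is $F(G)=\ell_g$; $G$ is symmetric if $F(G)=2g-1$. $G$ is pure $\kappa$-sparse if $\ell_{i+1}-\ell_i\le\kappa$ for all $i$ with equality for some $i$; $\mathcal{G}_\kappa(g)$ is the set of pure $\kappa$-sparse gapsets of genus $g$. *)

theory Defs
  imports Main
begin

definition gapset :: "nat set \<Rightarrow> bool" where
  "gapset G \<longleftrightarrow> finite G \<and> 0 \<notin> G \<and>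
     (\<forall>z\<in>G. \<forall>x y. 0 < x \<and> 0 < y \<and> z = x + y \<longrightarrow> x \<in> G \<or> y \<in> G)"

definition genus :: "nat set \<Rightarrow> nat" where
  "genus G = card G"

definition frobenius :: "nat set \<Rightarrow> nat" where
  "frobenius G = Max G"

definition symmetric_gapset :: "nat set \<Rightarrow> bool" where
  "symmetric_gapset G \<longleftrightarrow> frobenius G = 2 * genus G - 1"

definition pure_sparse :: "nat \<Rightarrow> nat set \<Rightarrow> bool" where
  "pure_sparse \<kappa> G \<longleftrightarrow>
     (let l = sorted_list_of_set G in
       (\<forall>i. i + 1 < length l \<longrightarrow> l ! (i + 1) - l ! i \<le> \<kappa>) \<and>
       (\<exists>i. i + 1 < length l \<and> l ! (i + 1) - l ! i = \<kappa>))"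

definition pure_sparse_gapsets :: "nat \<Rightarrow> nat \<Rightarrow> nat set set" where
  "pure_sparse_gapsets \<kappa> g = {G. gapset G \<and> pure_sparse \<kappa> G \<and> genus G = g}"

end

theory Submission
  imports Defs
begin


lemma ss_less_iff:
  assumes "sorted_wrt (<) (l::nat list)" "i < length l" "j < length l"
  shows "(l!i < l!j) = (i<j)"
proof
  assume "l!i < l!j"
  show "i<j"
  proof (rule ccontr)
    assume "\<not> i<j"
    then have "j \<le> i" by simp
    have "sorted l" using assms(1) by (metis sorted_wrt_mono_rel less_imp_le)
    then have "l!j \<le> l!i" using sorted_nth_mono \<open>j\<le>i\<close> assms(2) by blast
    then show False using \<open>l!i < l!j\<close> by simp
  qed
next
  assume "i<j" then show "l!i < l!j" using assms sorted_wrt_nth_less by blast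
qed

lemma sl_facts:
  assumes "finite G"
  shows "set (sorted_list_of_set G) = G" "sorted_wrt (<) (sorted_list_of_set (G::nat set))"
  using assms by (auto simp: strict_sorted_list_of_set)

lemma sparse_le:
  assumes "finite G" and pred: "\<forall>x\<in>G. Min G < x \<longrightarrow> (\<exists>y\<in>G. y < x \<and> x \<le> y + k)"
    and l: "l = sorted_list_of_set (G::nat set)" and i: "i+1 < length l"
  shows "l!(i+1) - l!i \<le> k"
proof -
  have S: "set l = G" "sorted_wrt (<) l" using sl_facts[OF assms(1)] l by auto
  have x: "l!(i+1) \<in> G" using S i by (metis nth_mem)
  have l0: "0 < length l" using i by linarith
  have "l!0 < l!(i+1)" using ss_less_iff[OF S(2) l0 i] by simp
  moreover have "l!0 \<in> G" using S l0 nth_mem by blast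
  then have "Min G \<le> l!0" using Min_le[OF assms(1)] by blast
  ultimately have "Min G < l!(i+1)" by simp
  then obtain y where y: "y \<in> G" "y < l!(i+1)" "l!(i+1) \<le> y + k" using pred x by blast
  obtain j where j: "j < length l" "l!j = y" using y S by (metis in_set_conv_nth)
  have "j < i+1" using ss_less_iff[OF S(2) j(1) i] j y by simp
  have ii: "i < length l" using i by linarith
  have "l!j \<le> l!i"
  proof (cases "j = i")
    case False
    then have "j < i" using \<open>j < i+1\<close> by simp
    then show ?thesis using ss_less_iff[OF S(2) j(1) ii] by simp
  qed simp
  then show ?thesis using y j by simp
qed

lemma sparse_eq:
  assumes "finite G" "a \<in> G" "a + k \<in> G" "0 < k" "\<forall>y. a < y \<and> y < a + k \<longrightarrow> y \<notin> G"
    and l: "l = sorted_list_of_set (G::nat set)"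
  shows "\<exists>i. i+1 < length l \<and> l!(i+1) - l!i = k"
proof -
  have S: "set l = G" "sorted_wrt (<) l" using sl_facts[OF assms(1)] l by auto
  obtain i where i: "i < length l" "l!i = a" using S assms(2) by (metis in_set_conv_nth)
  obtain j where j: "j < length l" "l!j = a+k" using S assms(3) by (metis in_set_conv_nth)
  have ij: "i < j" using ss_less_iff[OF S(2) i(1) j(1)] i j assms(4) by simp
  have "j = i+1"
  proof (rule ccontr)
    assume "j \<noteq> i+1"
    then have "i+1 < j" using ij by simp
    then have "a < l!(i+1)" "l!(i+1) < a+k" using ss_less_iff[OF S(2), of i "i+1"] ss_less_iff[OF S(2), of "i+1" j] i j by auto
    moreover have "l!(i+1) \<in> G" using S \<open>i+1<j\<close> j by (metis nth_mem less_trans)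
    ultimately show False using assms(5) by blast
  qed
  then show ?thesis using i j by auto
qed

lemma sparse_eq_rev:
  assumes "finite G" and l: "l = sorted_list_of_set (G::nat set)" and "i+1 < length l" "l!(i+1) - l!i = k"
  shows "l!i \<in> G \<and> l!(i+1) \<in> G \<and> l!(i+1) = l!i + k \<and> (\<forall>y. l!i < y \<and> y < l!(i+1) \<longrightarrow> y \<notin> G)"
proof -
  have S: "set l = G" "sorted_wrt (<) l" using sl_facts[OF assms(1)] l by auto
  have lt: "l!i < l!(i+1)" using ss_less_iff[OF S(2)] assms(3) by simp
  have "\<forall>y. l!i < y \<and> y < l!(i+1) \<longrightarrow> y \<notin> G"
  proof (intro allI impI)
    fix y assume y: "l!i < y \<and> y < l!(i+1)"
    show "y \<notin> G"
    proof
      assume "y \<in> G"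
      then obtain j where j: "j < length l" "l!j = y" using S by (metis in_set_conv_nth)
      have "i < j" using ss_less_iff[OF S(2) _ j(1), of i] assms(3) y j by simp
      moreover have "j < i+1" using ss_less_iff[OF S(2) j(1) assms(3)] y j by simp
      ultimately show False by simp
    qed
  qed
  then show ?thesis using S assms lt by (metis add_lessD1 le_add_diff_inverse less_imp_le nth_mem)
qed

lemma sparse_pred:
  assumes "finite G" and le: "\<forall>i. i + 1 < length l \<longrightarrow> l ! (i + 1) - l ! i \<le> k"
    and l: "l = sorted_list_of_set (G::nat set)" and "x \<in> G" "z \<in> G" "z < x"
  shows "\<exists>y\<in>G. y < x \<and> x \<le> y + k"
proof -
  have S: "set l = G" "sorted_wrt (<) l" using sl_facts[OF assms(1)] l by auto
  obtain j where j: "j < length l" "l!j = x" using S assms(4) by (metis in_set_conv_nth)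
  obtain m where m: "m < length l" "l!m = z" using S assms(5) by (metis in_set_conv_nth)
  have "m < j" using ss_less_iff[OF S(2) m(1) j(1)] m j assms(6) by simp
  then have j1: "(j-1)+1 = j" by simp
  have "l!(j-1) < l!j" using ss_less_iff[OF S(2), of "j-1" j] j \<open>m<j\<close> by simp
  moreover have "l!j - l!(j-1) \<le> k" using le j j1 by metis
  moreover have "l!(j-1) \<in> G" using S j by (metis nth_mem less_imp_diff_less)
  ultimately show ?thesis using j by force
qed

lemma sym_gap:
  assumes "gapset G" "G \<noteq> {}" "Max G = 2 * card G - 1" "x \<le> Max G"
  shows "(x \<in> G) = (Max G - x \<notin> G)"
proof -
  define F where "F = Max G"
  have fin: "finite G" and z: "0 \<notin> G" and cl: "\<forall>z\<in>G. \<forall>x y. 0 < x \<and> 0 < y \<and> z = x + y \<longrightarrow> x \<in> G \<or> y \<in> G"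
    using assms(1) unfolding gapset_def by auto
  have FG: "F \<in> G" using fin assms(2) F_def by simp
  have one: "y \<in> G \<or> F - y \<in> G" if "y \<le> F" for y
  proof (cases "y = 0 \<or> y = F")
    case True then show ?thesis using FG by auto
  next
    case False
    then have "0 < y" "0 < F - y" "F = y + (F-y)" using that by auto
    then show ?thesis using cl FG by blast
  qed
  define N where "N = {0..F} - G"
  have sub: "G \<subseteq> {0..F}" using fin F_def by auto
  have cN: "card N = card G"
  proof -
    have "card N = card {0..F} - card G" unfolding N_def using sub fin by (simp add: card_Diff_subset)
    moreover have "card G \<ge> 1" using fin assms(2) by (simp add: Suc_leI card_gt_0_iff)
    ultimately show ?thesis using assms(3) F_def by simp
  qed
  have inj: "inj_on (\<lambda>y. F - y) N" unfolding N_def by (auto simp: inj_on_def)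
  have im: "(\<lambda>y. F - y) ` N \<subseteq> G"
  proof
    fix w assume "w \<in> (\<lambda>y. F - y) ` N"
    then obtain y where "y \<in> N" "w = F - y" by blast
    then have "y \<le> F" "y \<notin> G" unfolding N_def by auto
    then show "w \<in> G" using one[of y] \<open>w = F - y\<close> by auto
  qed
  have "card ((\<lambda>y. F - y) ` N) = card G" using card_image[OF inj] cN by simp
  then have eq: "(\<lambda>y. F - y) ` N = G" using card_subset_eq[OF fin im] by simp
  show ?thesis
  proof
    assume xG: "x \<in> G"
    show "Max G - x \<notin> G"
    proof
      assume "Max G - x \<in> G"
      then obtain y where "y \<in> N" "F - x = F - y" using eq F_def by (metis image_iff)
      then have "y \<le> F" "y \<notin> G" unfolding N_def by auto
      then have "y = x" using \<open>F - x = F - y\<close> assms(4) F_def by simp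
      then show False using xG \<open>y \<notin> G\<close> by simp
    qed
  next
    assume "Max G - x \<notin> G" then show "x \<in> G" using one assms(4) F_def by blast
  qed
qed


definition phi :: "nat \<Rightarrow> nat set \<Rightarrow> nat set" where
  "phi n A = {z. (1 \<le> z \<and> z < 2*n) \<or> z = 2*n+1 \<or> z = 4*n+1 \<or> z = 6*n+1 \<or> z \<in> A \<or>
      (3*n+1 \<le> z \<and> z+1 \<le> 4*n \<and> 6*n+1-z \<notin> A)}"

lemma struct_lem:
  assumes n: "n \<ge> 1" and G: "G \<in> pure_sparse_gapsets (2 * n) (3 * n + 1)" and sG: "symmetric_gapset G"
  shows "G = phi n (G \<inter> {2*n+2..3*n})"
proof -
  have gs: "gapset G" and ps: "pure_sparse (2*n) G" and cG: "card G = 3*n+1"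
    using G unfolding pure_sparse_gapsets_def genus_def by auto
  have fin: "finite G" and z: "0 \<notin> G" and cl: "\<forall>z\<in>G. \<forall>x y. 0 < x \<and> 0 < y \<and> z = x + y \<longrightarrow> x \<in> G \<or> y \<in> G"
    using gs unfolding gapset_def by auto
  have ne: "G \<noteq> {}" using cG by auto
  have MF: "Max G = 6*n+1" using sG cG unfolding symmetric_gapset_def frobenius_def genus_def by simp
  have FG: "6*n+1 \<in> G" using Max_in[OF fin ne] MF by simp
  have above: "x \<notin> G" if "x > 6*n+1" for x using MF Max_ge[OF fin, of x] that by linarith
  have sym: "(x \<in> G) = (6*n+1 - x \<notin> G)" if "x \<le> 6*n+1" for x
  proof -
    have e: "Max G = 2 * card G - 1" using MF cG by simp
    have "x \<le> Max G" using MF that by simp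
    from sym_gap[OF gs ne e this] show ?thesis unfolding MF .
  qed
  define l where "l = sorted_list_of_set G"
  have le: "\<forall>i. i + 1 < length l \<longrightarrow> l ! (i + 1) - l ! i \<le> 2*n"
    and ex: "\<exists>i. i + 1 < length l \<and> l ! (i + 1) - l ! i = 2*n"
    using ps unfolding pure_sparse_def l_def[symmetric] Let_def by auto
  obtain i where i: "i + 1 < length l" "l ! (i + 1) - l ! i = 2*n" using ex by blast
  define a where "a = l!i"
  have aa: "a \<in> G" "a + 2*n \<in> G" "\<forall>y. a < y \<and> y < a + 2*n \<longrightarrow> y \<notin> G"
    using sparse_eq_rev[OF fin l_def i] a_def by auto
  have low: "k \<in> G" if "1 \<le> k" "k < 2*n" for k
  proof (rule ccontr)
    assume "k \<notin> G"
    have "a + 2*n = (a + 2*n - k) + k" "0 < a+2*n-k" using that by auto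
    then have "a + 2*n - k \<in> G \<or> k \<in> G" using cl[rule_format, OF aa(2), of "a+2*n-k" k] that by linarith
    moreover have "a + 2*n - k \<notin> G" using aa(3) that by auto
    ultimately show False using \<open>k \<notin> G\<close> by simp
  qed
  have mid: "x \<notin> G" if "4*n+2 \<le> x" "x \<le> 6*n" for x
  proof -
    have "6*n+1-x \<in> G" using low[of "6*n+1-x"] that by simp
    then show ?thesis using sym[of x] that by simp
  qed
  have one: "1 \<in> G" using low n by simp
  have "1 < 6*n+1" using n by simp
  then obtain y where y: "y \<in> G" "y < 6*n+1" "6*n+1 \<le> y + 2*n"
    using sparse_pred[OF fin le l_def FG one] by blast
  have G41: "4*n+1 \<in> G"
  proof (rule ccontr)
    assume "4*n+1 \<notin> G"
    then have "y \<noteq> 4*n+1" using y by auto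
    then have "4*n+2 \<le> y" "y \<le> 6*n" using y by auto
    then show False using mid y by blast
  qed
  have n2: "2*n \<notin> G"
  proof -
    have "6*n+1-2*n = 4*n+1" by simp
    then show ?thesis using sym[of "2*n"] G41 by simp
  qed
  have n4: "4*n \<notin> G"
  proof
    assume h: "4*n \<in> G"
    have "0 < 2*n" "4*n = 2*n + 2*n" using n by auto
    then have "2*n \<in> G" using cl h by blast
    then show False using n2 by simp
  qed
  have n21: "2*n+1 \<in> G"
  proof -
    have "6*n+1-(2*n+1) = 4*n" by simp
    then show ?thesis using sym[of "2*n+1"] n4 by simp
  qed
  show ?thesis
  proof (rule set_eqI)
    fix z
    let ?A = "G \<inter> {2*n+2..3*n}"
    have pm: "(z \<in> phi n ?A) = ((1 \<le> z \<and> z < 2*n) \<or> z = 2*n+1 \<or> z = 4*n+1 \<or> z = 6*n+1 \<or> z \<in> ?A \<or>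
      (3*n+1 \<le> z \<and> z+1 \<le> 4*n \<and> 6*n+1-z \<notin> ?A))" unfolding phi_def by simp
    consider "z = 0" | "z = 2*n" | "z = 4*n" | "4*n+2 \<le> z \<and> z \<le> 6*n" | "z > 6*n+1"
      | "1 \<le> z \<and> z < 2*n" | "z = 2*n+1" | "z = 4*n+1" | "z = 6*n+1" | "2*n+2 \<le> z \<and> z \<le> 3*n"
        | "3*n+1 \<le> z \<and> z+1 \<le> 4*n" by linarith
    then show "(z \<in> G) = (z \<in> phi n ?A)"
    proof cases
      case 1 then show ?thesis using z pm by simp
    next
      case 2 then show ?thesis using n2 pm n by simp
    next
      case 3 then show ?thesis using n4 pm n by simp
    next
      case 4 then have "z \<notin> G" using mid by blast
      then show ?thesis using pm 4 by auto
    next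
      case 5 then have "z \<notin> G" using above by blast
      then show ?thesis using pm 5 by auto
    next
      case 6 then show ?thesis using low pm by simp
    next
      case 7 then show ?thesis using n21 pm by simp
    next
      case 8 then show ?thesis using G41 pm by simp
    next
      case 9 then show ?thesis using FG pm by simp
    next
      case 10 then have "\<not> (3*n+1 \<le> z \<and> z+1 \<le> 4*n)" by linarith
      then show ?thesis using pm 10 by auto
    next
      case 11
      then have r: "2*n+2 \<le> 6*n+1-z" "6*n+1-z \<le> 3*n" by auto
      have "(z \<in> G) = (6*n+1-z \<notin> G)" using sym[of z] 11 by linarith
      moreover have "z \<notin> ?A" using 11 by auto
      moreover have "\<not> (1 \<le> z \<and> z < 2*n) \<and> z \<noteq> 2*n+1 \<and> z \<noteq> 4*n+1 \<and> z \<noteq> 6*n+1" using 11 by linarith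
      ultimately show ?thesis using pm r 11 by auto
    qed
  qed
qed


lemma phi_mem: "(z \<in> phi n A) = ((1 \<le> z \<and> z < 2*n) \<or> z = 2*n+1 \<or> z = 4*n+1 \<or> z = 6*n+1 \<or> z \<in> A \<or>
      (3*n+1 \<le> z \<and> z+1 \<le> 4*n \<and> 6*n+1-z \<notin> A))" unfolding phi_def by simp

lemma phi_inter: assumes "A \<subseteq> {2*n+2..3*n}" shows "phi n A \<inter> {2*n+2..3*n} = A"
proof (rule set_eqI)
  fix z show "(z \<in> phi n A \<inter> {2*n+2..3*n}) = (z \<in> A)"
  proof (cases "2*n+2 \<le> z \<and> z \<le> 3*n")
    case True
    then have "\<not>(1 \<le> z \<and> z < 2*n) \<and> z \<noteq> 2*n+1 \<and> z \<noteq> 4*n+1 \<and> z \<noteq> 6*n+1 \<and> \<not>(3*n+1 \<le> z)" by linarith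
    then show ?thesis using True by (simp add: phi_mem)
  next
    case False then show ?thesis using assms by auto
  qed
qed

lemma phi_le: assumes "A \<subseteq> {2*n+2..3*n}" "z \<in> phi n A" shows "1 \<le> z \<and> z \<le> 6*n+1"
proof -
  have "z \<in> A \<Longrightarrow> 1 \<le> z \<and> z \<le> 6*n+1" using assms(1) by auto
  then show ?thesis using assms(2) unfolding phi_mem by auto
qed

lemma phi_fin: assumes "A \<subseteq> {2*n+2..3*n}" shows "finite (phi n A)"
  using phi_le[OF assms] by (meson finite_atLeastAtMost finite_subset subsetI atLeastAtMost_iff)

lemma phi_card: assumes n: "n \<ge> 1" and A: "A \<subseteq> {2*n+2..3*n}" shows "card (phi n A) = 3*n+1"
proof -
  define I where "I = {2*n+2..3*n}"
  define C where "C = {z. 3*n+1 \<le> z \<and> z+1 \<le> 4*n \<and> 6*n+1-z \<notin> A}"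
  define P1 where "P1 = {1..<2*n}"
  define P2 where "P2 = {2*n+1, 4*n+1, 6*n+1}"
  have eq: "phi n A = ((P1 \<union> P2) \<union> A) \<union> C" unfolding P1_def P2_def C_def phi_def by auto
  have CI: "C = (\<lambda>x. 6*n+1-x) ` (I - A)"
  proof (rule set_eqI)
    fix z show "(z \<in> C) = (z \<in> (\<lambda>x. 6*n+1-x) ` (I - A))"
    proof
      assume z: "z \<in> C"
      then have "z = 6*n+1-(6*n+1-z)" "6*n+1-z \<in> I - A" unfolding C_def I_def by auto
      then show "z \<in> (\<lambda>x. 6*n+1-x) ` (I - A)" by blast
    next
      assume "z \<in> (\<lambda>x. 6*n+1-x) ` (I - A)"
      then obtain x where x: "x \<in> I" "x \<notin> A" "z = 6*n+1-x" by blast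
      then have "6*n+1-z = x" unfolding I_def by auto
      then show "z \<in> C" using x unfolding C_def I_def by auto
    qed
  qed
  have inj: "inj_on (\<lambda>x. 6*n+1-x) (I - A)" unfolding I_def inj_on_def by auto
  have finI: "finite I" unfolding I_def by simp
  have AI: "A \<subseteq> I" using A I_def by simp
  have finA: "finite A" using finite_subset[OF AI finI] .
  have cI: "card I = n - 1" unfolding I_def by simp
  have cC: "card C = card I - card A" using card_image[OF inj] CI card_Diff_subset[OF finA AI] by simp
  have cA: "card A \<le> card I" using card_mono[OF finI AI] .
  have cP1: "card P1 = 2*n-1" unfolding P1_def by simp
  have cP2: "card P2 = 3" unfolding P2_def using n by simp
  have d1: "P1 \<inter> P2 = {}" unfolding P1_def P2_def by auto
  have d2: "(P1 \<union> P2) \<inter> A = {}" unfolding P1_def P2_def using A by auto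
  have d3: "((P1 \<union> P2) \<union> A) \<inter> C = {}" unfolding P1_def P2_def C_def using A by auto
  have "C \<subseteq> {..4*n}" unfolding C_def by auto
  then have f: "finite P1" "finite P2" "finite C" unfolding P1_def P2_def using finite_subset by auto
  have "card (phi n A) = card P1 + card P2 + card A + card C"
    unfolding eq using d1 d2 d3 f finA by (simp add: card_Un_disjoint)
  then show ?thesis using cI cC cA cP1 cP2 n by simp
qed

lemma phi_max: assumes "A \<subseteq> {2*n+2..3*n}" shows "Max (phi n A) = 6*n+1"
proof (rule Max_eqI)
  show "finite (phi n A)" using phi_fin[OF assms] .
  show "6*n+1 \<in> phi n A" by (simp add: phi_mem)
  fix y assume "y \<in> phi n A" then show "y \<le> 6*n+1" using phi_le[OF assms] by blast
qed

lemma phi_gapset: assumes n: "n \<ge> 1" and A: "A \<subseteq> {2*n+2..3*n}" shows "gapset (phi n A)"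
  unfolding gapset_def
proof (intro conjI ballI allI impI)
  show "finite (phi n A)" using phi_fin[OF A] .
  show "0 \<notin> phi n A" using phi_le[OF A] by fastforce
  fix z x y assume z: "z \<in> phi n A" and xy: "0 < x \<and> 0 < y \<and> z = x + y"
  show "x \<in> phi n A \<or> y \<in> phi n A"
  proof (rule ccontr)
    assume "\<not> (x \<in> phi n A \<or> y \<in> phi n A)"
    then have nx: "x \<notin> phi n A" and ny: "y \<notin> phi n A" by auto
    have x2: "2*n \<le> x" using nx xy unfolding phi_mem by linarith
    have y2: "2*n \<le> y" using ny xy unfolding phi_mem by linarith
    have zA: "z \<notin> A" using A x2 y2 xy n by auto
    have key: False if "v + w = 6*n+1" "v \<notin> phi n A" "w \<notin> phi n A" "2*n \<le> v" "v \<le> 3*n" for v w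
    proof -
      have "v \<noteq> 2*n" using that by (auto simp: phi_mem)
      moreover have "v \<noteq> 2*n+1" using that by (auto simp: phi_mem)
      ultimately have v: "2*n+2 \<le> v" using that by linarith
      have "v \<notin> A" using that by (auto simp: phi_mem)
      moreover have "3*n+1 \<le> w \<and> w+1 \<le> 4*n \<and> 6*n+1-w = v" using that v by linarith
      ultimately have "w \<in> phi n A" by (simp add: phi_mem)
      then show False using that by simp
    qed
    consider "z = 4*n+1" | "z = 6*n+1" using z zA x2 y2 xy n unfolding phi_mem by linarith
    then show False
    proof cases
      case 1
      then have "x = 2*n+1 \<or> y = 2*n+1" using x2 y2 xy by linarith
      then show False using nx ny by (auto simp: phi_mem)
    next
      case 2
      then have "x \<le> 3*n \<or> y \<le> 3*n" using xy by linarith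
      then show False using key[of x y] key[of y x] xy 2 nx ny x2 y2 by auto
    qed
  qed
qed

lemma phi_sparse: assumes n: "n \<ge> 1" and A: "A \<subseteq> {2*n+2..3*n}" shows "pure_sparse (2*n) (phi n A)"
proof -
  define G where "G = phi n A"
  define l where "l = sorted_list_of_set G"
  have fin: "finite G" using phi_fin[OF A] G_def by simp
  have ne: "G \<noteq> {}" unfolding G_def by (auto simp: phi_mem)
  have pred: "\<forall>x\<in>G. Min G < x \<longrightarrow> (\<exists>y\<in>G. y < x \<and> x \<le> y + 2*n)"
  proof (intro ballI impI)
    fix x assume x: "x \<in> G" "Min G < x"
    have "Min G \<in> G" using Min_in[OF fin ne] .
    then have "1 \<le> Min G" using phi_le[OF A] G_def by blast
    then have x1: "1 < x" using x by simp
    have xs: "x \<in> phi n A" using x G_def by simp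
    have m: "2*n-1 \<in> G" "2*n+1 \<in> G" "4*n+1 \<in> G" using n unfolding G_def by (auto simp: phi_mem)
    consider "x < 2*n" | "x = 2*n+1" | "2*n+2 \<le> x \<and> x \<le> 4*n+1" | "x = 6*n+1"
      using xs A phi_le[OF A xs] unfolding phi_mem by (auto; linarith)
    then show "\<exists>y\<in>G. y < x \<and> x \<le> y + 2*n"
    proof cases
      case 1
      then have "1 \<le> x-1 \<and> x-1 < 2*n" using x1 by linarith
      then have "x - 1 \<in> G" unfolding G_def by (simp add: phi_mem)
      moreover have "x - 1 < x \<and> x \<le> (x-1) + 2*n" using x1 n by linarith
      ultimately show ?thesis by blast
    next
      case 2
      then have "2*n-1 < x \<and> x \<le> (2*n-1) + 2*n" using n x1 by linarith
      then show ?thesis using m(1) by blast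
    next
      case 3
      then have "2*n+1 < x \<and> x \<le> (2*n+1) + 2*n" using n x1 by linarith
      then show ?thesis using m(2) by blast
    next
      case 4
      then have "4*n+1 < x \<and> x \<le> (4*n+1) + 2*n" using n x1 by linarith
      then show ?thesis using m(3) by blast
    qed
  qed
  have le: "\<forall>i. i + 1 < length l \<longrightarrow> l ! (i + 1) - l ! i \<le> 2*n"
    using sparse_le[OF fin pred l_def] by blast
  have gap: "\<forall>y. 4*n+1 < y \<and> y < 4*n+1 + 2*n \<longrightarrow> y \<notin> G"
  proof (intro allI impI)
    fix y assume y: "4*n+1 < y \<and> y < 4*n+1 + 2*n"
    then have "y \<notin> A" using A by auto
    then show "y \<notin> G" using y unfolding G_def phi_mem by auto
  qed
  have "4*n+1 \<in> G" "4*n+1+2*n \<in> G" unfolding G_def by (auto simp: phi_mem)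
  then have ex: "\<exists>i. i+1 < length l \<and> l!(i+1) - l!i = 2*n"
    using sparse_eq[OF fin _ _ _ gap l_def] n by simp
  show ?thesis unfolding pure_sparse_def Let_def using le ex l_def G_def by simp
qed


theorem mainTheorem4:
  fixes n :: nat
  assumes "n \<ge> 1"
  shows "card {G \<in> pure_sparse_gapsets (2 * n) (3 * n + 1). symmetric_gapset G} = 2 ^ (n - 1)"
proof -
  define I where "I = {2*n+2..3*n}"
  have eq: "{G \<in> pure_sparse_gapsets (2 * n) (3 * n + 1). symmetric_gapset G} = phi n ` Pow I"
  proof (rule set_eqI)
    fix G show "(G \<in> {G \<in> pure_sparse_gapsets (2 * n) (3 * n + 1). symmetric_gapset G}) = (G \<in> phi n ` Pow I)"
    proof
      assume "G \<in> {G \<in> pure_sparse_gapsets (2 * n) (3 * n + 1). symmetric_gapset G}"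
      then have "G = phi n (G \<inter> I)" using struct_lem[OF assms] I_def by blast
      then show "G \<in> phi n ` Pow I" by blast
    next
      assume "G \<in> phi n ` Pow I"
      then obtain A where A: "A \<subseteq> {2*n+2..3*n}" "G = phi n A" using I_def by blast
      have c: "card G = 3*n+1" using phi_card[OF assms A(1)] A by simp
      have "gapset G" "pure_sparse (2*n) G" using phi_gapset[OF assms A(1)] phi_sparse[OF assms A(1)] A by auto
      moreover have "symmetric_gapset G" unfolding symmetric_gapset_def frobenius_def genus_def
        using phi_max[OF A(1)] A c by simp
      ultimately show "G \<in> {G \<in> pure_sparse_gapsets (2 * n) (3 * n + 1). symmetric_gapset G}"
        unfolding pure_sparse_gapsets_def genus_def using c by simp
    qed
  qed
  have inj: "inj_on (phi n) (Pow I)"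
  proof (rule inj_onI)
    fix A B assume "A \<in> Pow I" "B \<in> Pow I" "phi n A = phi n B"
    then show "A = B" using phi_inter[of A n] phi_inter[of B n] I_def by auto
  qed
  have "card (phi n ` Pow I) = card (Pow I)" using card_image[OF inj] .
  also have "\<dots> = 2 ^ card I" by (simp add: I_def card_Pow)
  also have "card I = n - 1" unfolding I_def by simp
  finally show ?thesis using eq by simp
qed

end
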